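(* Let $f\colon X\to X$ be a homeomorphism of a metric space $X$ and $\mu$ a Borel probability measure inner-distal with respect to $f$. If $f$ is asymptotically expansive, then $\mu$ is positively meagre-expansive. If $f$ is bi-asymptotically expansive, then $\mu$ is meagre-expansive.
   Context: $\mathcal{P}(x)=\{y\colon \inf_{n\in\mathbb{Z}} d(f^n(x),f^n(y))=0\}$; $\mu$ is inner-distal if $\mu(\operatorname{Int}\mathcal{P}(x))=0$ for all $x$. $f$ is asymptotically expansive if there is $\delta>0$ such that $d(f^n(x),f^n(y))\le\delta$ for all $n\ge0$ implies $\lim_{n\to\infty}d(f^n(x),f^n(y))=0$; $f$ is bi-asymptotically expansive if $f$ and $f^{-1}$ are asymptotically expansive. $\Gamma^+_\delta(x)=\{y\colon d(f^n(x),f^n(y))\le\delta\ \forall n\ge0\}$ and $\Gamma_\delta(x)=\{y\colon d(f^n(x),f^n(y))\le\delta\ \forall n\in\mathbb{Z}\}$. $\mu$ is positively meagre-expansive (resp. meagre-expansive) if there is $\delta>0$ with $\mu(\operatorname{Int}\Gamma^+_\delta(x))=0$ (resp. $\mu(\operatorname{Int}\Gamma_\delta(x))=0$) for all $x\in X$. *)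

theory Defs
  imports "HOL-Analysis.Analysis" "HOL-Probability.Probability"
begin

definition iter_int :: "('a \<Rightarrow> 'a) \<Rightarrow> int \<Rightarrow> 'a \<Rightarrow> 'a" where
  "iter_int f n = (if 0 \<le> n then f ^^ nat n else (inv f) ^^ nat (- n))"

definition homeo :: "('a::metric_space \<Rightarrow> 'a) \<Rightarrow> bool" where
  "homeo f \<longleftrightarrow> bij f \<and> continuous_on UNIV f \<and> continuous_on UNIV (inv f)"

definition proximal_cell :: "('a::metric_space \<Rightarrow> 'a) \<Rightarrow> 'a \<Rightarrow> 'a set" where
  "proximal_cell f x = {y. (INF n::int. dist (iter_int f n x) (iter_int f n y)) = 0}"

definition inner_distal :: "'a::metric_space measure \<Rightarrow> ('a \<Rightarrow> 'a) \<Rightarrow> bool" where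
  "inner_distal M f \<longleftrightarrow> (\<forall>x. measure M (interior (proximal_cell f x)) = 0)"

definition asymp_expansive :: "('a::metric_space \<Rightarrow> 'a) \<Rightarrow> bool" where
  "asymp_expansive f \<longleftrightarrow> (\<exists>\<delta>>0. \<forall>x y.
      (\<forall>n::nat. dist ((f ^^ n) x) ((f ^^ n) y) \<le> \<delta>) \<longrightarrow>
      (\<lambda>n. dist ((f ^^ n) x) ((f ^^ n) y)) \<longlonglongrightarrow> 0)"

definition bi_asymp_expansive :: "('a::metric_space \<Rightarrow> 'a) \<Rightarrow> bool" where
  "bi_asymp_expansive f \<longleftrightarrow> asymp_expansive f \<and> asymp_expansive (inv f)"

definition Gamma_plus :: "('a::metric_space \<Rightarrow> 'a) \<Rightarrow> real \<Rightarrow> 'a \<Rightarrow> 'a set" where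
  "Gamma_plus f \<delta> x = {y. \<forall>n::nat. dist ((f ^^ n) x) ((f ^^ n) y) \<le> \<delta>}"

definition Gamma :: "('a::metric_space \<Rightarrow> 'a) \<Rightarrow> real \<Rightarrow> 'a \<Rightarrow> 'a set" where
  "Gamma f \<delta> x = {y. \<forall>n::int. dist (iter_int f n x) (iter_int f n y) \<le> \<delta>}"

definition pos_meagre_expansive :: "'a::metric_space measure \<Rightarrow> ('a \<Rightarrow> 'a) \<Rightarrow> bool" where
  "pos_meagre_expansive M f \<longleftrightarrow>
     (\<exists>\<delta>>0. \<forall>x. measure M (interior (Gamma_plus f \<delta> x)) = 0)"

definition meagre_expansive :: "'a::metric_space measure \<Rightarrow> ('a \<Rightarrow> 'a) \<Rightarrow> bool" where
  "meagre_expansive M f \<longleftrightarrow>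
     (\<exists>\<delta>>0. \<forall>x. measure M (interior (Gamma f \<delta> x)) = 0)"

end

theory Submission
  imports Defs
begin

lemma iter_int_nat: "iter_int f (int n) = f ^^ n"
  by (simp add: iter_int_def)

lemma gp_sub_prox:
  assumes "\<forall>x y. (\<forall>n::nat. dist ((f ^^ n) x) ((f ^^ n) y) \<le> d) \<longrightarrow>
      (\<lambda>n. dist ((f ^^ n) x) ((f ^^ n) y)) \<longlonglongrightarrow> 0"
  shows "Gamma_plus f d x \<subseteq> proximal_cell f x"
proof
  fix y assume "y \<in> Gamma_plus f d x"
  hence lim: "(\<lambda>n. dist ((f ^^ n) x) ((f ^^ n) y)) \<longlonglongrightarrow> 0"
    using assms by (auto simp: Gamma_plus_def)
  define g where "g = (\<lambda>n::int. dist (iter_int f n x) (iter_int f n y))"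
  have bdd: "bdd_below (range g)" unfolding g_def by (rule bdd_belowI[of _ 0]) auto
  have ge: "0 \<le> (INF n. g n)" by (rule cINF_greatest) (auto simp: g_def)
  have "\<And>k. (INF n. g n) \<le> dist ((f ^^ k) x) ((f ^^ k) y)"
  proof -
    fix k :: nat
    have "(INF n. g n) \<le> g (int k)" by (rule cINF_lower[OF bdd]) auto
    thus "(INF n. g n) \<le> dist ((f ^^ k) x) ((f ^^ k) y)" by (simp add: g_def iter_int_nat)
  qed
  hence "(INF n. g n) \<le> 0" using lim by (intro LIMSEQ_le_const) auto
  with ge have "(INF n. g n) = 0" by simp
  thus "y \<in> proximal_cell f x" by (simp add: proximal_cell_def g_def)
qed

lemma gamma_sub: "Gamma f d x \<subseteq> Gamma_plus f d x"
proof
  fix y assume "y \<in> Gamma f d x"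
  hence "\<forall>n::int. dist (iter_int f n x) (iter_int f n y) \<le> d" by (simp add: Gamma_def)
  hence "\<forall>n::nat. dist ((f ^^ n) x) ((f ^^ n) y) \<le> d"
    by (metis iter_int_nat)
  thus "y \<in> Gamma_plus f d x" by (simp add: Gamma_plus_def)
qed

lemma meas_zero:
  assumes "prob_space M" "sets M = sets borel" "A \<subseteq> B"
    "measure M (interior B) = 0"
  shows "measure M (interior A) = 0"
proof -
  interpret prob_space M by fact
  have "interior B \<in> sets M" using assms(2) by simp
  moreover have "interior A \<subseteq> interior B" using assms(3) by (rule interior_mono)
  ultimately have "measure M (interior A) \<le> measure M (interior B)"
    by (intro finite_measure_mono)
  thus ?thesis using assms(4) measure_nonneg[of M "interior A"] by linarith
qed

theorem lemma3p6:
  fixes f :: "'a::metric_space \<Rightarrow> 'a" and M :: "'a measure"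
  assumes "homeo f"
    and "prob_space M" and "sets M = sets borel"
    and "inner_distal M f"
  shows "(asymp_expansive f \<longrightarrow> pos_meagre_expansive M f)
       \<and> (bi_asymp_expansive f \<longrightarrow> meagre_expansive M f)"
proof -
  have A: "pos_meagre_expansive M f \<and> meagre_expansive M f" if ae: "asymp_expansive f"
  proof -
    obtain d where d: "d > 0" "\<forall>x y. (\<forall>n::nat. dist ((f ^^ n) x) ((f ^^ n) y) \<le> d) \<longrightarrow>
      (\<lambda>n. dist ((f ^^ n) x) ((f ^^ n) y)) \<longlonglongrightarrow> 0"
      using ae unfolding asymp_expansive_def by blast
    have P: "measure M (interior (Gamma_plus f d x)) = 0" for x
      using meas_zero[OF assms(2,3) gp_sub_prox[OF d(2)]] assms(4)
      by (simp add: inner_distal_def)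
    have Q: "measure M (interior (Gamma f d x)) = 0" for x
      using meas_zero[OF assms(2,3) gamma_sub P] .
    show ?thesis using P Q d(1)
      unfolding pos_meagre_expansive_def meagre_expansive_def by blast
  qed
  thus ?thesis unfolding bi_asymp_expansive_def by blast
qed

end
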